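(* Let $N\in\mathbb{Z}_{\ge2}$ and let $b_1,\dots,b_t$ be any ordering of $\mathscr{B}_N$, with associated sequence $\Delta_1,\dots,\Delta_t$. Then the vectors $$\sum_{j=1}^t c_{b_j}e_{b_j}-\Big(\sum_{j=1}^t c_{b_j}\Big)e_1,\qquad c_{b_j}\in\mathbb{Z},\ 0\le c_{b_j}<\Delta_j,$$ form a complete system of representatives of $S(N)/Z(N)$.
   Context: $\mathscr{D}(N)$ is the set of positive divisors of $N$, $\{e_n\}_{n\mid N}$ the standard basis of $\mathbb{Z}^{\mathscr{D}(N)}$. $S(N)=\{(r_n)_{n\mid N}\in\mathbb{Z}^{\mathscr{D}(N)}:\sum_n r_n=0\}$. $Z(N)$ is the subgroup of $(r_n)\in S(N)$ with $\sum_{n\mid N}nr_n\equiv0\pmod{24}$, $\sum_{n\mid N}\frac Nn r_n\equiv0\pmod{24}$, and $\prod_{n:\,r_n\text{ odd}}n$ a perfect square. For a prime $p\mid N$: $\mathscr{B}_N^p=\{p\}$ if $p\ne2,3$; $\mathscr{B}_N^2=\{2\}$ if $v_2(N)=1$, $\{2,4\}$ if $v_2(N)=2$, $\{2^{\alpha-2},2^{\alpha-1},2^\alpha\}$ if $v_2(N)=\alpha\ge3$; $\mathscr{B}_N^3=\{3\}$ if $v_3(N)=1$, $\{3^{\alpha-1},3^\alpha\}$ if $v_3(N)=\alpha\ge2$; $\mathscr{B}_N=\bigcup_{p\mid N}\mathscr{B}_N^p$. For integers $(c_n)_{n\in\mathscr{B}_N}$ consider the system (S): $\sum_{n\in\mathscr{B}_N}(n-1)c_n\equiv0\pmod{24}$;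 $\sum_{n\in\mathscr{B}_N}(N/n-N)c_n\equiv0\pmod{24}$; $c_p\equiv0\pmod2$ for every prime $p\mid N$, $p\ne2,3$; $\sum_{2^\beta\in\mathscr{B}_N,\,c_{2^\beta}\text{ odd}}\beta\equiv0\pmod2$ and $\sum_{3^\beta\in\mathscr{B}_N,\,c_{3^\beta}\text{ odd}}\beta\equiv0\pmod2$. For an ordering $b_1,\dots,b_t$ of $\mathscr{B}_N$, $\Delta_i$ is the least $m\in\{1,\dots,24\}$ such that some $(c_n)$ satisfies (S) with $c_{b_j}=0$ for $j<i$ and $c_{b_i}=m$. *)

theory Defs
  imports "HOL-Computational_Algebra.Primes"
begin

definition divs :: "nat \<Rightarrow> nat set" where
  "divs N = {n. 0 < n \<and> n dvd N}"

text \<open>Vectors in Z^{D(N)} are functions nat => int vanishing outside divs N;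
  standard basis vector e_m.\<close>
definition evec :: "nat \<Rightarrow> nat \<Rightarrow> int" where
  "evec m = (\<lambda>n. if n = m then 1 else 0)"

definition SN :: "nat \<Rightarrow> (nat \<Rightarrow> int) set" where
  "SN N = {r. (\<forall>n. n \<notin> divs N \<longrightarrow> r n = 0) \<and> (\<Sum>n\<in>divs N. r n) = 0}"

definition ZN :: "nat \<Rightarrow> (nat \<Rightarrow> int) set" where
  "ZN N = {r \<in> SN N.
      (\<Sum>n\<in>divs N. int n * r n) mod 24 = 0 \<and>
      (\<Sum>n\<in>divs N. int (N div n) * r n) mod 24 = 0 \<and>
      (\<exists>k::nat. (\<Prod>n\<in>{n\<in>divs N. odd (r n)}. n) = k ^ 2)}"

definition B2 :: "nat \<Rightarrow> nat set" where
  "B2 N = (let a = multiplicity (2::nat) N in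
     if a = 0 then {} else if a = 1 then {2} else if a = 2 then {2, 4}
     else {2 ^ (a - 2), 2 ^ (a - 1), 2 ^ a})"

definition B3 :: "nat \<Rightarrow> nat set" where
  "B3 N = (let a = multiplicity (3::nat) N in
     if a = 0 then {} else if a = 1 then {3}
     else {3 ^ (a - 1), 3 ^ a})"

definition BN :: "nat \<Rightarrow> nat set" where
  "BN N = {p. prime p \<and> p dvd N \<and> p \<noteq> 2 \<and> p \<noteq> 3} \<union> B2 N \<union> B3 N"

definition sysS :: "nat \<Rightarrow> (nat \<Rightarrow> int) \<Rightarrow> bool" where
  "sysS N c \<longleftrightarrow>
     (\<Sum>n\<in>BN N. (int n - 1) * c n) mod 24 = 0 \<and>
     (\<Sum>n\<in>BN N. (int (N div n) - int N) * c n) mod 24 = 0 \<and>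
     (\<forall>p. prime p \<and> p dvd N \<and> p \<noteq> 2 \<and> p \<noteq> 3 \<longrightarrow> even (c p)) \<and>
     even (\<Sum>\<beta>\<in>{\<beta>::nat. 2 ^ \<beta> \<in> B2 N \<and> odd (c (2 ^ \<beta>))}. \<beta>) \<and>
     even (\<Sum>\<beta>\<in>{\<beta>::nat. 3 ^ \<beta> \<in> B3 N \<and> odd (c (3 ^ \<beta>))}. \<beta>)"

text \<open>Delta for the ordering bs (0-indexed: Delta N bs i is Delta_{i+1}).\<close>
definition Delta :: "nat \<Rightarrow> nat list \<Rightarrow> nat \<Rightarrow> int" where
  "Delta N bs i = (LEAST m::int. 1 \<le> m \<and> m \<le> 24 \<and>
      (\<exists>c. sysS N c \<and> (\<forall>j<i. c (bs ! j) = 0) \<and> c (bs ! i) = m))"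

text \<open>The vector sum_j c_j e_{b_j} - (sum_j c_j) e_1, with c indexed by positions.\<close>
definition repvec :: "nat list \<Rightarrow> (nat \<Rightarrow> int) \<Rightarrow> nat \<Rightarrow> int" where
  "repvec bs c = (\<lambda>n. (\<Sum>j<length bs. c j * evec (bs ! j) n)
                      - (\<Sum>j<length bs. c j) * evec 1 n)"

definition Reps :: "nat \<Rightarrow> nat list \<Rightarrow> (nat \<Rightarrow> int) set" where
  "Reps N bs = {repvec bs c | c. \<forall>j<length bs. 0 \<le> c j \<and> c j < Delta N bs j}"

end

theory Submission imports Defs "HOL-Computational_Algebra.Nth_Powers"
begin

definition coef :: "nat \<Rightarrow> nat \<Rightarrow> nat \<Rightarrow> int" where
  "coef N i n = (if i = 0 then int n else if i = 1 then int (N div n) else int (multiplicity i n))"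

definition tau :: "nat \<Rightarrow> nat \<Rightarrow> nat \<Rightarrow> int" where
  "tau N n i = coef N i n - coef N i 1"

definition okm :: "int \<Rightarrow> bool \<Rightarrow> (nat \<Rightarrow> int) \<Rightarrow> bool" where
  "okm m b v \<longleftrightarrow> m dvd v 0 \<and> m dvd v 1 \<and> (b \<longrightarrow> (\<forall>p. prime p \<longrightarrow> even (v p)))"

definition lin :: "nat \<Rightarrow> (nat \<Rightarrow> int) \<Rightarrow> nat \<Rightarrow> int" where
  "lin N c i = (\<Sum>b\<in>BN N. c b * tau N b i)"

definition inH :: "nat \<Rightarrow> int \<Rightarrow> bool \<Rightarrow> (nat \<Rightarrow> int) \<Rightarrow> bool" where
  "inH N m bb v \<longleftrightarrow> (\<exists>c. okm m bb (\<lambda>i. v i - lin N c i))"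

lemma tau0: "tau N n 0 = int n - 1" by (simp add: tau_def coef_def)
lemma tau1: "tau N n (Suc 0) = int (N div n) - int N" by (simp add: tau_def coef_def)
lemma taup: "prime p \<Longrightarrow> tau N n p = int (multiplicity p n)"
  by (auto simp: tau_def coef_def)

lemma okm_add: "okm m b v \<Longrightarrow> okm m b w \<Longrightarrow> okm m b (\<lambda>i. v i + w i)"
  by (auto simp: okm_def)
lemma okm_diff: "okm m b v \<Longrightarrow> okm m b w \<Longrightarrow> okm m b (\<lambda>i. v i - w i)"
  by (auto simp: okm_def)
lemma okm_scale: "okm m b v \<Longrightarrow> okm m b (\<lambda>i. k * v i)"
  by (auto simp: okm_def)
lemma okm_zero: "okm m b (\<lambda>i. 0)"
  by (auto simp: okm_def)

lemma finite_BN: "N > 0 \<Longrightarrow> finite (BN N)"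
proof -
  assume N: "N > 0"
  have "finite {p. prime p \<and> p dvd N \<and> p \<noteq> 2 \<and> p \<noteq> 3}"
    by (rule finite_subset[of _ "{..N}"]) (use N in \<open>auto dest: dvd_imp_le\<close>)
  moreover have "finite (B2 N)" by (simp add: B2_def Let_def)
  moreover have "finite (B3 N)" by (simp add: B3_def Let_def)
  ultimately show ?thesis by (simp add: BN_def)
qed

lemma lin_add: "lin N (\<lambda>b. c b + d b) i = lin N c i + lin N d i"
  by (simp add: lin_def distrib_right sum.distrib)
lemma lin_scale: "lin N (\<lambda>b. k * c b) i = k * lin N c i"
  by (simp add: lin_def sum_distrib_left mult.assoc)

lemma inH_add: "inH N m bb v \<Longrightarrow> inH N m bb w \<Longrightarrow> inH N m bb (\<lambda>i. v i + w i)"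
proof -
  assume "inH N m bb v" "inH N m bb w"
  then obtain c d where "okm m bb (\<lambda>i. v i - lin N c i)" "okm m bb (\<lambda>i. w i - lin N d i)"
    by (auto simp: inH_def)
  from okm_add[OF this] show ?thesis
    unfolding inH_def by (intro exI[of _ "\<lambda>b. c b + d b"]) (simp add: lin_add algebra_simps)
qed

lemma inH_scale: "inH N m bb v \<Longrightarrow> inH N m bb (\<lambda>i. k * v i)"
proof -
  assume "inH N m bb v"
  then obtain c where "okm m bb (\<lambda>i. v i - lin N c i)" by (auto simp: inH_def)
  from okm_scale[OF this, of k] show ?thesis
    unfolding inH_def by (intro exI[of _ "\<lambda>b. k * c b"]) (simp add: lin_scale algebra_simps)
qed

lemma inH_cong: "inH N m bb w \<Longrightarrow> okm m bb (\<lambda>i. v i - w i) \<Longrightarrow> inH N m bb v"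
proof -
  assume "inH N m bb w" "okm m bb (\<lambda>i. v i - w i)"
  moreover from this obtain c where "okm m bb (\<lambda>i. w i - lin N c i)" by (auto simp: inH_def)
  ultimately show ?thesis
    unfolding inH_def using okm_add by (intro exI[of _ c]) fastforce
qed

lemma inH_zero: "inH N m bb (\<lambda>i. 0)"
  unfolding inH_def by (intro exI[of _ "\<lambda>b. 0"]) (simp add: lin_def okm_def)

lemma inH_B: "N > 0 \<Longrightarrow> b \<in> BN N \<Longrightarrow> inH N m bb (tau N b)"
proof -
  assume N: "N > 0" and b: "b \<in> BN N"
  have "lin N (\<lambda>x. if x = b then 1 else 0) i = tau N b i" for i
  proof -
    have "lin N (\<lambda>x. if x = b then 1 else 0) i = (\<Sum>x\<in>BN N. if x = b then tau N x i else 0)"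
      unfolding lin_def by (rule sum.cong) auto
    also have "\<dots> = tau N b i" using b finite_BN[OF N] by simp
    finally show ?thesis .
  qed
  then show ?thesis unfolding inH_def
    by (intro exI[of _ "\<lambda>x. if x = b then 1 else 0"]) (simp add: okm_def)
qed

lemma inH_sum: "finite A \<Longrightarrow> (\<And>x. x \<in> A \<Longrightarrow> inH N m bb (f x)) \<Longrightarrow> inH N m bb (\<lambda>i. \<Sum>x\<in>A. f x i)"
  by (induction A rule: finite_induct) (auto intro: inH_zero inH_add)

lemma inH_crt: "inH N 8 True v \<Longrightarrow> inH N 3 False v \<Longrightarrow> inH N 24 True v"
proof -
  assume "inH N 8 True v" "inH N 3 False v"
  then obtain c d where c: "okm 8 True (\<lambda>i. v i - lin N c i)" and d: "okm 3 False (\<lambda>i. v i - lin N d i)"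
    by (auto simp: inH_def)
  have e: "v i - lin N (\<lambda>b. 9 * c b + 16 * d b) i =
    9 * (v i - lin N c i) + 16 * (v i - lin N d i) - 24 * v i" for i
    by (simp only: lin_add lin_scale) (simp add: algebra_simps)
  have h1: "24 dvd 9*a + 16*b - 24*w" if "8 dvd a" "3 dvd b" for a b w :: int
    using that by presburger
  have h2: "even (9*a + 16*b - 24*w)" if "even a" for a b w :: int
    using that by presburger
  show ?thesis unfolding inH_def
  proof (intro exI[of _ "\<lambda>b. 9 * c b + 16 * d b"])
    from c d show "okm 24 True (\<lambda>i. v i - lin N (\<lambda>b. 9 * c b + 16 * d b) i)"
      unfolding e okm_def
      using h1 h2 by blast
  qed
qed

lemma sq8: "odd (x::nat) \<Longrightarrow> (8::int) dvd (int x)^2 - 1"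
proof -
  assume "odd x"
  then obtain k where k: "x = 2*k+1" using oddE by blast
  have "even (k*(k+1))" by simp
  then obtain l where "k*(k+1) = 2*l" by blast
  then have "int k * (int k + 1) = 2 * int l" by (metis of_nat_mult of_nat_numeral of_nat_add of_nat_1)
  then have "(int x)^2 - 1 = 8 * int l" unfolding k by (simp add: power2_eq_square algebra_simps)
  then show ?thesis by simp
qed

lemma sq3: "\<not> 3 dvd (x::nat) \<Longrightarrow> (3::int) dvd (int x)^2 - 1"
proof -
  assume a: "\<not> 3 dvd x"
  have "x mod 3 = 1 \<or> x mod 3 = 2" using a by presburger
  moreover have "x = 3*(x div 3) + x mod 3" by simp
  ultimately obtain k where "x = 3*k+1 \<or> x = 3*k+2" by metis
  then show ?thesis
  proof
    assume "x = 3*k+1"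
    then have "(int x)^2 - 1 = 3 * (3*int k*int k + 2 * int k)" by (simp add: power2_eq_square algebra_simps)
    then show ?thesis by simp
  next
    assume "x = 3*k+2"
    then have "(int x)^2 - 1 = 3 * (3*int k*int k + 4 * int k + 1)" by (simp add: power2_eq_square algebra_simps)
    then show ?thesis by simp
  qed
qed

lemma tau_mult:
  assumes N: "N > 0" and d: "x * y dvd N"
  shows "tau N (x*y) 0 - tau N x 0 - int x * tau N y 0 = 0"
    and "tau N (x*y) 1 - tau N x 1 - int x * tau N y 1 = int (N div (x*y)) * (1 - int y) * (1 - (int x)^2)"
    and "prime p \<Longrightarrow> tau N (x*y) p - tau N x p - int x * tau N y p = (1 - int x) * int (multiplicity p y)"
proof -
  obtain K where K: "N = x * y * K" using d by blast
  have x0: "x > 0" and y0: "y > 0" and K0: "K > 0" using K N by auto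
  show "tau N (x*y) 0 - tau N x 0 - int x * tau N y 0 = 0" by (simp add: tau0 algebra_simps)
  have e1: "N div (x*y) = K" "N div x = y * K" "N div y = x * K" using K x0 y0 by auto
  show "tau N (x*y) 1 - tau N x 1 - int x * tau N y 1 = int (N div (x*y)) * (1 - int y) * (1 - (int x)^2)"
    unfolding One_nat_def tau1 e1 by (simp add: K power2_eq_square algebra_simps)
  assume p: "prime p"
  have "multiplicity p (x*y) = multiplicity p x + multiplicity p y"
    using p x0 y0 by (simp add: prime_elem_multiplicity_mult_distrib)
  then show "tau N (x*y) p - tau N x p - int x * tau N y p = (1 - int x) * int (multiplicity p y)"
    using p by (simp add: taup algebra_simps)
qed

lemma L8:
  assumes N: "N > 0" and d: "x * y dvd N" and x: "odd x"
  shows "okm 8 True (\<lambda>i. tau N (x*y) i - tau N x i - int x * tau N y i)"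
proof -
  have "8 dvd int (N div (x*y)) * (1 - int y) * (1 - (int x)^2)"
  proof -
    have "8 dvd (1 - (int x)^2)" using sq8[OF x] by (metis dvd_minus_iff minus_diff_eq)
    then show ?thesis by simp
  qed
  moreover have "even ((1 - int x) * int (multiplicity p y))" for p using x by simp
  ultimately show ?thesis unfolding okm_def using tau_mult[OF N d] by simp
qed

lemma L3:
  assumes N: "N > 0" and d: "x * y dvd N" and x: "\<not> 3 dvd x"
  shows "okm 3 False (\<lambda>i. tau N (x*y) i - tau N x i - int x * tau N y i)"
proof -
  have "3 dvd int (N div (x*y)) * (1 - int y) * (1 - (int x)^2)"
  proof -
    have "3 dvd (1 - (int x)^2)" using sq3[OF x] by (metis dvd_minus_iff minus_diff_eq)
    then show ?thesis by simp
  qed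
  then show ?thesis unfolding okm_def using tau_mult[OF N d] by simp
qed

lemma inH_mult:
  assumes "okm m bb (\<lambda>i. tau N (x*y) i - tau N x i - int x * tau N y i)"
    and "inH N m bb (tau N x)" and "inH N m bb (tau N y)"
  shows "inH N m bb (tau N (x*y))"
proof -
  have "inH N m bb (\<lambda>i. tau N x i + int x * tau N y i)"
    using assms by (intro inH_add inH_scale)
  then show ?thesis by (rule inH_cong) (use assms(1) in \<open>simp add: algebra_simps\<close>)
qed

lemma tau_1: "tau N 1 = (\<lambda>i. 0)"
  by (auto simp: tau_def)

lemma SQ8:
  assumes N: "N > 0" and d: "x^2 * y dvd N" and x: "odd x"
  shows "okm 8 True (\<lambda>i. tau N (x^2*y) i - tau N y i)"
proof -
  have x0: "x > 0" using x by (auto intro: odd_pos)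
  have a: "okm 8 True (\<lambda>i. tau N (x^2*y) i - tau N (x^2) i - int (x^2) * tau N y i)"
    using L8[OF N d] x by simp
  have dx: "x^2 dvd N" using d dvd_mult_left by blast
  have s: "8 dvd (int x)^2 - 1" using sq8[OF x] .
  have b: "okm 8 True (tau N (x^2))"
  proof -
    obtain K where K: "N = x^2 * K" using dx by blast
    have "N div x^2 = K" using K x0 by simp
    then have "tau N (x^2) 1 = int K * (1 - (int x)^2)" using K by (simp add: tau1 algebra_simps)
    moreover have "8 dvd int K * (1 - (int x)^2)" using s by (metis dvd_minus_iff minus_diff_eq dvd_mult)
    moreover have "tau N (x^2) 0 = (int x)^2 - 1" by (simp add: tau0)
    moreover have "even (tau N (x^2) p)" if "prime p" for p
      using that x0 by (simp add: taup prime_elem_multiplicity_power_distrib)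
    ultimately show ?thesis using s unfolding okm_def by (simp add: One_nat_def)
  qed
  have c: "okm 8 True (\<lambda>i. ((int x)^2 - 1) * tau N y i)"
    unfolding okm_def using s x by simp
  have "okm 8 True (\<lambda>i. (tau N (x^2*y) i - tau N (x^2) i - int (x^2) * tau N y i) + tau N (x^2) i + ((int x)^2 - 1) * tau N y i)"
    by (intro okm_add a b c)
  then show ?thesis by (simp add: algebra_simps)
qed

lemma SQ3:
  assumes N: "N > 0" and d: "x^2 * y dvd N" and x: "\<not> 3 dvd x"
  shows "okm 3 False (\<lambda>i. tau N (x^2*y) i - tau N y i)"
proof -
  have x0: "x > 0" using x by (cases x) auto
  have p3: "prime (3::nat)" by (simp add: prime_iff)
  have x2: "\<not> 3 dvd x^2" using x p3 by (simp add: prime_dvd_power_iff)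
  have a: "okm 3 False (\<lambda>i. tau N (x^2*y) i - tau N (x^2) i - int (x^2) * tau N y i)"
    using L3[OF N d x2] by simp
  have dx: "x^2 dvd N" using d dvd_mult_left by blast
  have s: "3 dvd (int x)^2 - 1" using sq3[OF x] .
  have b: "okm 3 False (tau N (x^2))"
  proof -
    obtain K where K: "N = x^2 * K" using dx by blast
    have "N div x^2 = K" using K x0 by simp
    then have "tau N (x^2) 1 = int K * (1 - (int x)^2)" using K by (simp add: tau1 algebra_simps)
    moreover have "3 dvd int K * (1 - (int x)^2)" using s by (metis dvd_minus_iff minus_diff_eq dvd_mult)
    moreover have "tau N (x^2) 0 = (int x)^2 - 1" by (simp add: tau0)
    ultimately show ?thesis using s unfolding okm_def by (simp add: One_nat_def)
  qed
  have c: "okm 3 False (\<lambda>i. ((int x)^2 - 1) * tau N y i)"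
    unfolding okm_def using s by simp
  have "okm 3 False (\<lambda>i. (tau N (x^2*y) i - tau N (x^2) i - int (x^2) * tau N y i) + tau N (x^2) i + ((int x)^2 - 1) * tau N y i)"
    by (intro okm_add a b c)
  then show ?thesis by (simp add: algebra_simps)
qed

lemma mult_pow_prime:
  assumes "prime p" "prime q"
  shows "multiplicity p (q ^ k) = (if p = q then k else 0)"
  using assms by (simp add: prime_elem_multiplicity_power_distrib prime_multiplicity_other)

lemma B2_mem:
  assumes "1 \<le> k" "k \<le> multiplicity 2 N" "multiplicity 2 N \<le> 3 \<or> multiplicity 2 N - 2 \<le> k"
  shows "2^k \<in> BN N"
proof -
  define a where "a = multiplicity (2::nat) N"
  have "2^k \<in> B2 N"
  proof (cases "a \<le> 3")
    case True
    then have "a = 1 \<or> a = 2 \<or> a = 3" using assms a_def by linarith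
    moreover have "k = 1 \<or> k = 2 \<or> k = 3" using assms True a_def by linarith
    ultimately show ?thesis using assms unfolding B2_def Let_def a_def[symmetric] by auto
  next
    case False
    then have "k = a - 2 \<or> k = a - 1 \<or> k = a" using assms a_def by linarith
    then show ?thesis using False unfolding B2_def Let_def a_def[symmetric] by auto
  qed
  then show ?thesis by (simp add: BN_def)
qed

lemma B3_mem:
  assumes "1 \<le> k" "k \<le> multiplicity 3 N" "multiplicity 3 N \<le> 2 \<or> multiplicity 3 N - 1 \<le> k"
  shows "3^k \<in> BN N"
proof -
  define a where "a = multiplicity (3::nat) N"
  have "3^k \<in> B3 N"
  proof (cases "a \<le> 2")
    case True
    then have "a = 1 \<or> a = 2" using assms a_def by linarith
    moreover have "k = 1 \<or> k = 2" using assms True a_def by linarith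
    ultimately show ?thesis using assms unfolding B3_def Let_def a_def[symmetric] by auto
  next
    case False
    then have "k = a - 1 \<or> k = a" using assms a_def by linarith
    then show ?thesis using False unfolding B3_def Let_def a_def[symmetric] by auto
  qed
  then show ?thesis by (simp add: BN_def)
qed

lemma P_mem: "prime p \<Longrightarrow> p dvd N \<Longrightarrow> p \<noteq> 2 \<Longrightarrow> p \<noteq> 3 \<Longrightarrow> p \<in> BN N"
  by (simp add: BN_def)

lemma prime3: "prime (3::nat)" by (simp add: prime_iff)

lemma tau2pow:
  assumes N: "N = 2^al * N'" and "odd N'" and k: "k \<le> al"
  shows "tau N (2^k) 0 = 2^k - 1"
    and "tau N (2^k) 1 = 2^(al-k) * int N' - 2^al * int N'"
    and "prime p \<Longrightarrow> tau N (2^k) p = (if p = 2 then int k else 0)"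
proof -
  show "tau N (2^k) 0 = 2^k - 1" by (simp add: tau0)
  have "N div 2^k = 2^(al-k) * N'"
  proof -
    have "N = 2^k * (2^(al-k) * N')" using k N by (simp add: power_add[symmetric])
    then show ?thesis by simp
  qed
  then show "tau N (2^k) 1 = 2^(al-k) * int N' - 2^al * int N'" using N by (simp add: tau1)
  assume "prime p" then show "tau N (2^k) p = (if p = 2 then int k else 0)"
    by (simp add: taup mult_pow_prime)
qed

lemma tau3pow:
  assumes N: "N = 3^al * N'" and k: "k \<le> al"
  shows "tau N (3^k) 0 = 3^k - 1"
    and "tau N (3^k) 1 = 3^(al-k) * int N' - 3^al * int N'"
proof -
  show "tau N (3^k) 0 = 3^k - 1" by (simp add: tau0)
  have "N div 3^k = 3^(al-k) * N'"
  proof -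
    have "N = 3^k * (3^(al-k) * N')" using k N by (simp add: power_add[symmetric])
    then show ?thesis by simp
  qed
  then show "tau N (3^k) 1 = 3^(al-k) * int N' - 3^al * int N'" using N by (simp add: tau1)
qed

lemma pow2_8:
  assumes N0: "N > 0" and a: "a \<le> multiplicity 2 N"
  shows "inH N 8 True (tau N (2^a))"
proof -
  define al where "al = multiplicity (2::nat) N"
  have nz: "N \<noteq> 0" "\<not> is_unit (2::nat)" using N0 by auto
  obtain N' where N: "N = 2^al * N'" and N'odd: "\<not> 2 dvd N'"
    using multiplicity_decompose'[OF nz] unfolding al_def by metis
  have a': "a \<le> al" using a al_def by simp
  show ?thesis
  proof (cases "a = 0")
    case True show ?thesis unfolding True power_0 tau_1 by (rule inH_zero)
  next
    case a0: False
    show ?thesis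
    proof (cases "al \<le> 3 \<or> al - 2 \<le> a")
      case True
      then have "2^a \<in> BN N" using a0 a' by (intro B2_mem) (auto simp: al_def)
      then show ?thesis by (rule inH_B[OF N0])
    next
      case False
      then have al4: "al \<ge> 4" and aa: "a + 3 \<le> al" by auto
      define s :: int where "s = 2^a - 1"
      define t :: int where "t = int a + s * (int al + 1)"
      define Q :: int where "Q = 2^(al-2)"
      have Q1: "(2::int)^(al-1) = 2*Q"
      proof -
        have "al - 1 = Suc (al - 2)" using al4 by simp
        then show ?thesis unfolding Q_def by simp
      qed
      have Q1': "(2::int)^(al - Suc 0) = 2*Q" using Q1 by simp
      have Q2: "(2::int)^al = 4*Q"
      proof -
        have "al = Suc (Suc (al - 2))" using al4 by simp
        then have "(2::int)^al = 2^(Suc (Suc (al - 2)))" by simp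
        then show ?thesis unfolding Q_def by simp
      qed
      have NN: "odd N'" using N'odd by simp
      note T = tau2pow[OF N NN]
      have U: "inH N 8 True (tau N (2^(al-2)))" and V: "inH N 8 True (tau N (2^(al-1)))"
        and W: "inH N 8 True (tau N (2^al))"
        using al4 by (auto intro!: inH_B[OF N0] B2_mem simp: al_def[symmetric])
      have comb: "inH N 8 True (\<lambda>i. t * tau N (2^(al-2)) i + (s - 3*t) * tau N (2^(al-1)) i + (2*t - 2*s) * tau N (2^al) i)"
        by (intro inH_add inH_scale U V W)
      have ok: "okm 8 True (\<lambda>i. tau N (2^a) i - (t * tau N (2^(al-2)) i + (s - 3*t) * tau N (2^(al-1)) i + (2*t - 2*s) * tau N (2^al) i))"
        unfolding okm_def
      proof (intro conjI allI impI)
        have e0: "tau N (2^a) 0 - (t * tau N (2^(al-2)) 0 + (s - 3*t) * tau N (2^(al-1)) 0 + (2*t - 2*s) * tau N (2^al) 0) = - 3 * Q * (t - 2*s)"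
          using a' by (simp add: T Q1 Q1' Q2 Q_def[symmetric] s_def[symmetric] algebra_simps)
        have "8 dvd 3 * Q * (t - 2*s)"
        proof (cases "al = 4")
          case True
          then have "a = 1" using aa a0 by simp
          then show ?thesis using True by (simp add: Q_def t_def s_def)
        next
          case False
          then have "al - 2 = (al - 5) + 3" using al4 by simp
          then have "Q = 2^(al-5) * 2^3" unfolding Q_def by (metis power_add)
          then have "Q = 8 * 2^(al-5)" by simp
          then show ?thesis by simp
        qed
        then show "8 dvd tau N (2^a) 0 - (t * tau N (2^(al-2)) 0 + (s - 3*t) * tau N (2^(al-1)) 0 + (2*t - 2*s) * tau N (2^al) 0)"
          unfolding e0 by simp
        have "al - a = (al - a - 3) + 3" using aa by simp
        then have "(2::int)^(al-a) = 2^(al-a-3) * 2^3" by (metis power_add)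
        then have p3: "(2::int)^(al-a) = 8 * 2^(al-a-3)" by simp
        have h: "(2::int)^(al - (al-2)) = 4" "(2::int)^(al - (al-1)) = 2" "(2::int)^(al-al) = 1" using al4 by auto
        have v1: "tau N (2^a) 1 = 8 * 2^(al-a-3) * int N' - 4*Q*int N'"
          using T(2)[OF a'] p3 Q2 by simp
        have v2: "tau N (2^(al-2)) 1 = 4 * int N' - 4*Q*int N'"
          using T(2)[of "al-2"] h Q2 by simp
        have v3: "tau N (2^(al-1)) 1 = 2 * int N' - 4*Q*int N'"
          using T(2)[of "al-1"] h Q2 by simp
        have v4: "tau N (2^al) 1 = int N' - 4*Q*int N'"
          using T(2)[of "al"] h Q2 by simp
        have e1: "tau N (2^a) 1 - (t * tau N (2^(al-2)) 1 + (s - 3*t) * tau N (2^(al-1)) 1 + (2*t - 2*s) * tau N (2^al) 1)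
           = 8 * 2^(al-a-3) * int N' - 4 * Q * int N' * (1 + s)"
          unfolding v1 v2 v3 v4 by (simp add: algebra_simps)
        have "al - 2 = Suc (al - 3)" using al4 by simp
        then have "Q = 2 * 2^(al-3)" unfolding Q_def by simp
        then have "8 dvd 4 * Q * int N' * (1 + s)" by simp
        then show "8 dvd tau N (2^a) 1 - (t * tau N (2^(al-2)) 1 + (s - 3*t) * tau N (2^(al-1)) 1 + (2*t - 2*s) * tau N (2^al) 1)"
          unfolding e1 by (simp add: dvd_diff)
        fix p :: nat assume p: "prime p"
        have "tau N (2^a) p - (t * tau N (2^(al-2)) p + (s - 3*t) * tau N (2^(al-1)) p + (2*t - 2*s) * tau N (2^al) p) = 0"
        proof (cases "p = 2")
          case True
          then show ?thesis using a' al4 p by (simp add: T t_def of_nat_diff algebra_simps)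
        next
          case False
          then show ?thesis using a' al4 p by (simp add: T)
        qed
        then show "even (tau N (2^a) p - (t * tau N (2^(al-2)) p + (s - 3*t) * tau N (2^(al-1)) p + (2*t - 2*s) * tau N (2^al) p))"
          by simp
      qed
      show ?thesis by (rule inH_cong[OF comb ok])
    qed
  qed
qed

lemma okm_swap: "okm m b (\<lambda>i. v i - w i) \<Longrightarrow> okm m b (\<lambda>i. w i - v i)"
  using okm_scale[of m b "\<lambda>i. v i - w i" "-1"] by simp

lemma pow_odd_split: "odd (j::nat) \<Longrightarrow> (q::nat)^j = (q^(j div 2))^2 * q"
proof -
  assume "odd j"
  then have "j = 2 * (j div 2) + 1" by simp
  then have "q^j = q^(2 * (j div 2) + 1)" by simp
  also have "\<dots> = (q^(j div 2))^2 * q" by (simp add: power_add power_mult[symmetric] mult.commute)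
  finally show ?thesis .
qed

lemma pow3_8:
  assumes N0: "N > 0" and d: "3 dvd N"
  shows "inH N 8 True (tau N 3)"
proof -
  define be where "be = multiplicity (3::nat) N"
  have be1: "be \<ge> 1" using d N0 prime_multiplicity_gt_zero_iff[of 3 N] prime3 unfolding be_def
    by simp
  define j where "j = (if odd be then be else be - 1)"
  have j: "odd j" "1 \<le> j" "j \<le> be" "be \<le> 2 \<or> be - 1 \<le> j" using be1 unfolding j_def by auto
  have jB: "3^j \<in> BN N" using j by (intro B3_mem) (auto simp: be_def)
  have jd: "3^j dvd N" using j(3) unfolding be_def by (simp add: multiplicity_dvd')
  have e: "(3::nat)^j = (3^(j div 2))^2 * 3" by (rule pow_odd_split[OF j(1)])
  have "okm 8 True (\<lambda>i. tau N ((3^(j div 2))^2 * 3) i - tau N 3 i)"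
    by (rule SQ8[OF N0]) (use jd e in auto)
  then have "okm 8 True (\<lambda>i. tau N 3 i - tau N (3^j) i)" unfolding e[symmetric] by (rule okm_swap)
  then show ?thesis by (rule inH_cong[OF inH_B[OF N0 jB]])
qed

lemma pow2_3:
  assumes N0: "N > 0" and d: "2 dvd N"
  shows "inH N 3 False (tau N 2)"
proof -
  define be where "be = multiplicity (2::nat) N"
  have be1: "be \<ge> 1" using d N0 prime_multiplicity_gt_zero_iff[of 2 N] unfolding be_def
    by simp
  define j where "j = (if odd be then be else be - 1)"
  have j: "odd j" "1 \<le> j" "j \<le> be" "be \<le> 3 \<or> be - 2 \<le> j" using be1 unfolding j_def by auto
  have jB: "2^j \<in> BN N" using j by (intro B2_mem) (auto simp: be_def)
  have jd: "2^j dvd N" using j(3) unfolding be_def by (simp add: multiplicity_dvd')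
  have e: "(2::nat)^j = (2^(j div 2))^2 * 2" by (rule pow_odd_split[OF j(1)])
  have n3: "\<not> 3 dvd (2::nat)^(j div 2)"
  proof
    assume "3 dvd (2::nat)^(j div 2)"
    then have "3 dvd (2::nat)" by (rule prime_dvd_power[OF prime3])
    then show False by simp
  qed
  have "okm 3 False (\<lambda>i. tau N ((2^(j div 2))^2 * 2) i - tau N 2 i)"
    by (rule SQ3[OF N0 _ n3]) (use jd e in auto)
  then have "okm 3 False (\<lambda>i. tau N 2 i - tau N (2^j) i)" unfolding e[symmetric] by (rule okm_swap)
  then show ?thesis by (rule inH_cong[OF inH_B[OF N0 jB]])
qed

lemma odd_8:
  assumes N0: "N > 0"
  shows "odd m \<Longrightarrow> m dvd N \<Longrightarrow> inH N 8 True (tau N m)"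
proof (induction m rule: less_induct)
  case (less m)
  show ?case
  proof (cases "m = 1")
    case True show ?thesis unfolding True tau_1 by (rule inH_zero)
  next
    case False
    then obtain q where q: "prime q" "q dvd m" using prime_factor_nat by blast
    then obtain m' where m: "m = q * m'" by blast
    have m0: "m > 0" using less.prems by (auto intro: odd_pos)
    have q2: "q \<ge> 2" using q prime_ge_2_nat by blast
    have "m' > 0" using m m0 by auto
    then have "m' < m" unfolding m using q2 by (intro n_less_m_mult_n) auto
    moreover have "odd m'" "m' dvd N" using less.prems m by auto
    ultimately have IH: "inH N 8 True (tau N m')" using less.IH by blast
    have qo: "odd q" using less.prems m by auto
    have qN: "q dvd N" using less.prems m by (meson dvd_mult_left dvd_trans)
    have tq: "inH N 8 True (tau N q)"
    proof (cases "q = 3")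
      case True then show ?thesis using pow3_8[OF N0] qN by simp
    next
      case False
      then have "q \<in> BN N" using q qo qN by (intro P_mem) auto
      then show ?thesis by (rule inH_B[OF N0])
    qed
    have "okm 8 True (\<lambda>i. tau N (q*m') i - tau N q i - int q * tau N m' i)"
      by (rule L8[OF N0]) (use less.prems m qo in auto)
    then show ?thesis unfolding m by (rule inH_mult[OF _ tq IH])
  qed
qed

lemma all_8:
  assumes N0: "N > 0" and n: "n dvd N"
  shows "inH N 8 True (tau N n)"
proof -
  have n0: "n \<noteq> 0" using n N0 by auto
  have nz: "n \<noteq> 0" "\<not> is_unit (2::nat)" using n0 by auto
  obtain m where m: "n = 2^multiplicity 2 n * m" and mo: "\<not> 2 dvd m"
    using multiplicity_decompose'[OF nz] by metis
  define a where "a = multiplicity 2 n"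
  have "2^a dvd N" using n m a_def by (metis dvd_mult_left dvd_trans)
  then have a: "a \<le> multiplicity 2 N" using N0 by (simp add: power_dvd_iff_le_multiplicity)
  have mN: "m dvd N" using n m by (metis dvd_mult_right dvd_trans)
  have e: "n = m * 2^a" using m a_def by (simp add: mult.commute)
  have "okm 8 True (\<lambda>i. tau N (m * 2^a) i - tau N m i - int m * tau N (2^a) i)"
    by (rule L8[OF N0]) (use n e mo in auto)
  then show ?thesis unfolding e
    by (rule inH_mult[OF _ odd_8[OF N0] pow2_8[OF N0 a]]) (use mo mN in auto)
qed

lemma three_dvd_pow: "k \<ge> 1 \<Longrightarrow> (3::int) dvd 3^k"
  by (metis One_nat_def Suc_le_D dvd_triv_left power_Suc)

lemma pow3_3:
  assumes N0: "N > 0" and b: "b \<le> multiplicity 3 N"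
  shows "inH N 3 False (tau N (3^b))"
proof -
  define be where "be = multiplicity (3::nat) N"
  have nz: "N \<noteq> 0" "\<not> is_unit (3::nat)" using N0 by auto
  obtain N' where N: "N = 3^be * N'"
    using multiplicity_decompose'[OF nz] unfolding be_def by metis
  have b': "b \<le> be" using b be_def by simp
  show ?thesis
  proof (cases "b = 0")
    case True show ?thesis unfolding True power_0 tau_1 by (rule inH_zero)
  next
    case b0: False
    show ?thesis
    proof (cases "be \<le> 2 \<or> be - 1 \<le> b")
      case True
      then have "3^b \<in> BN N" using b0 b' by (intro B3_mem) (auto simp: be_def)
      then show ?thesis by (rule inH_B[OF N0])
    next
      case False
      then have be3: "be \<ge> 3" and bb: "b + 2 \<le> be" by auto
      have W: "inH N 3 False (tau N (3^(be-1)))"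
        using be3 by (auto intro!: inH_B[OF N0] B3_mem simp: be_def[symmetric])
      have ok: "okm 3 False (\<lambda>i. tau N (3^b) i - tau N (3^(be-1)) i)"
        unfolding okm_def
      proof (intro conjI)
        have "tau N (3^b) 0 - tau N (3^(be-1)) 0 = 3^b - 3^(be-1)"
          using b' be3 by (simp add: tau3pow[OF N])
        moreover have "(3::int) dvd 3^b - 3^(be-1)" using b0 be3
          by (intro dvd_diff three_dvd_pow) auto
        ultimately show "3 dvd tau N (3^b) 0 - tau N (3^(be-1)) 0" by simp
        have h: "(3::int)^(be - (be - 1)) = 3" using be3 by simp
        have "tau N (3^b) 1 - tau N (3^(be-1)) 1 = 3^(be-b) * int N' - 3 * int N'"
          using tau3pow(2)[OF N b'] tau3pow(2)[OF N, of "be-1"] h by simp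
        moreover have "(3::int) dvd 3^(be-b) * int N' - 3 * int N'" using bb
          by (intro dvd_diff dvd_mult2 three_dvd_pow) auto
        ultimately show "3 dvd tau N (3^b) 1 - tau N (3^(be-1)) 1" by simp
      qed simp
      show ?thesis by (rule inH_cong[OF W ok])
    qed
  qed
qed

lemma co3_3:
  assumes N0: "N > 0"
  shows "\<not> 3 dvd m \<Longrightarrow> m dvd N \<Longrightarrow> inH N 3 False (tau N m)"
proof (induction m rule: less_induct)
  case (less m)
  show ?case
  proof (cases "m = 1")
    case True show ?thesis unfolding True tau_1 by (rule inH_zero)
  next
    case False
    then obtain q where q: "prime q" "q dvd m" using prime_factor_nat by blast
    then obtain m' where m: "m = q * m'" by blast
    have m0: "m > 0" using less.prems by (cases m) auto
    have q2: "q \<ge> 2" using q prime_ge_2_nat by blast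
    have "m' > 0" using m m0 by auto
    then have "m' < m" unfolding m using q2 by (intro n_less_m_mult_n) auto
    moreover have "\<not> 3 dvd m'" "m' dvd N" using less.prems m by auto
    ultimately have IH: "inH N 3 False (tau N m')" using less.IH by blast
    have qo: "\<not> 3 dvd q" using less.prems m by auto
    have qN: "q dvd N" using less.prems m by (meson dvd_mult_left dvd_trans)
    have tq: "inH N 3 False (tau N q)"
    proof (cases "q = 2")
      case True then show ?thesis using pow2_3[OF N0] qN by simp
    next
      case False
      then have "q \<in> BN N" using q qo qN by (intro P_mem) auto
      then show ?thesis by (rule inH_B[OF N0])
    qed
    have "okm 3 False (\<lambda>i. tau N (q*m') i - tau N q i - int q * tau N m' i)"
      by (rule L3[OF N0]) (use less.prems m qo in auto)
    then show ?thesis unfolding m by (rule inH_mult[OF _ tq IH])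
  qed
qed

lemma all_3:
  assumes N0: "N > 0" and n: "n dvd N"
  shows "inH N 3 False (tau N n)"
proof -
  have n0: "n \<noteq> 0" using n N0 by auto
  have nz: "n \<noteq> 0" "\<not> is_unit (3::nat)" using n0 by auto
  obtain m where m: "n = 3^multiplicity 3 n * m" and mo: "\<not> 3 dvd m"
    using multiplicity_decompose'[OF nz] by metis
  define a where "a = multiplicity 3 n"
  have "3^a dvd N" using n m a_def by (metis dvd_mult_left dvd_trans)
  then have a: "a \<le> multiplicity 3 N" using N0 by (simp add: power_dvd_iff_le_multiplicity)
  have mN: "m dvd N" using n m by (metis dvd_mult_right dvd_trans)
  have e: "n = m * 3^a" using m a_def by (simp add: mult.commute)
  have "okm 3 False (\<lambda>i. tau N (m * 3^a) i - tau N m i - int m * tau N (3^a) i)"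
    by (rule L3[OF N0]) (use n e mo in auto)
  then show ?thesis unfolding e
    by (rule inH_mult[OF _ co3_3[OF N0] pow3_3[OF N0 a]]) (use mo mN in auto)
qed

lemma all_24:
  assumes N0: "N > 0" and n: "n dvd N"
  shows "inH N 24 True (tau N n)"
  using inH_crt all_8[OF assms] all_3[OF assms] by blast

lemma B2_pow: "b \<in> B2 N \<Longrightarrow> \<exists>k. 1 \<le> k \<and> k \<le> multiplicity 2 N \<and> b = 2^k"
proof -
  assume b: "b \<in> B2 N"
  define a where "a = multiplicity (2::nat) N"
  consider "a = 1" "b = 2" | "a = 2" "b = 2 \<or> b = 4" | "a \<ge> 3" "b = 2^(a-2) \<or> b = 2^(a-1) \<or> b = 2^a"
    using b unfolding B2_def Let_def a_def[symmetric] by (auto split: if_splits)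
  then show ?thesis
  proof cases
    case 1 then show ?thesis by (intro exI[of _ 1]) (auto simp: a_def)
  next
    case 2 then show ?thesis by (auto simp: a_def intro: exI[of _ 1] exI[of _ 2])
  next
    case 3 then show ?thesis
      by (auto simp: a_def[symmetric] intro: exI[of _ "a-2"] exI[of _ "a-1"] exI[of _ a])
  qed
qed

lemma B3_pow: "b \<in> B3 N \<Longrightarrow> \<exists>k. 1 \<le> k \<and> k \<le> multiplicity 3 N \<and> b = 3^k"
proof -
  assume b: "b \<in> B3 N"
  define a where "a = multiplicity (3::nat) N"
  consider "a = 1" "b = 3" | "a \<ge> 2" "b = 3^(a-1) \<or> b = 3^a"
    using b unfolding B3_def Let_def a_def[symmetric] by (auto split: if_splits)
  then show ?thesis
  proof cases
    case 1 then show ?thesis by (intro exI[of _ 1]) (auto simp: a_def)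
  next
    case 2 then show ?thesis
      by (auto simp: a_def[symmetric] intro: exI[of _ "a-1"] exI[of _ a])
  qed
qed

lemma BN_divs: assumes N0: "N > 0" and b: "b \<in> BN N" shows "b \<in> divs N"
proof -
  consider "prime b" "b dvd N" | "b \<in> B2 N" | "b \<in> B3 N" using b unfolding BN_def by blast
  then show ?thesis
  proof cases
    case 1 then show ?thesis by (auto simp: divs_def prime_gt_0_nat)
  next
    case 2 then obtain k where "k \<le> multiplicity 2 N" "b = 2^k" using B2_pow by blast
    then show ?thesis by (auto simp: divs_def multiplicity_dvd')
  next
    case 3 then obtain k where "k \<le> multiplicity 3 N" "b = 3^k" using B3_pow by blast
    then show ?thesis by (auto simp: divs_def multiplicity_dvd')
  qed
qed

lemma finite_divs: "N > 0 \<Longrightarrow> finite (divs N)"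
  by (rule finite_subset[of _ "{..N}"]) (auto simp: divs_def dest: dvd_imp_le)

lemma one_divs: "1 \<in> divs N" by (simp add: divs_def)

definition invt :: "nat \<Rightarrow> (nat \<Rightarrow> int) \<Rightarrow> nat \<Rightarrow> int" where
  "invt N v i = (\<Sum>n\<in>divs N. coef N i n * v n)"

lemma inv_diff: "invt N (\<lambda>n. v n - w n) i = invt N v i - invt N w i"
  by (simp add: invt_def algebra_simps sum_subtractf)

lemma inv_S: assumes "v \<in> SN N" shows "invt N v i = (\<Sum>n\<in>divs N. v n * tau N n i)"
proof -
  have "(\<Sum>n\<in>divs N. v n * tau N n i) = (\<Sum>n\<in>divs N. coef N i n * v n) - coef N i 1 * (\<Sum>n\<in>divs N. v n)"
    by (simp add: tau_def algebra_simps sum_subtractf sum_distrib_right)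
  also have "(\<Sum>n\<in>divs N. v n) = 0" using assms by (simp add: SN_def)
  finally show ?thesis by (simp add: invt_def)
qed

lemma inH_inv: assumes N0: "N > 0" and v: "v \<in> SN N" shows "inH N 24 True (invt N v)"
proof -
  have "inH N 24 True (\<lambda>i. \<Sum>n\<in>divs N. v n * tau N n i)"
    by (rule inH_sum[OF finite_divs[OF N0]]) (auto intro!: inH_scale all_24[OF N0] simp: divs_def)
  moreover have "invt N v = (\<lambda>i. \<Sum>n\<in>divs N. v n * tau N n i)" by (rule ext) (rule inv_S[OF v])
  ultimately show ?thesis by simp
qed

lemma parity_sum:
  assumes "finite D"
  shows "even (\<Sum>n\<in>D. (m n :: int) * v n) \<longleftrightarrow> even (\<Sum>n\<in>{n\<in>D. odd (v n)}. m n)"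
proof -
  have "even (\<Sum>n\<in>D. m n * v n - (if odd (v n) then m n else 0))"
    by (intro dvd_sum) auto
  moreover have "(\<Sum>n\<in>{n\<in>D. odd (v n)}. m n) = (\<Sum>n\<in>D. if odd (v n) then m n else 0)"
    using assms by (simp add: sum.inter_filter)
  ultimately show ?thesis by (simp add: sum_subtractf)
qed

lemma square_iff:
  assumes N0: "N > 0"
  shows "(\<exists>k::nat. (\<Prod>n\<in>{n\<in>divs N. odd (v n)}. n) = k^2) \<longleftrightarrow>
         (\<forall>p. prime p \<longrightarrow> even (\<Sum>n\<in>divs N. int (multiplicity p n) * v n))"
proof -
  let ?A = "{n\<in>divs N. odd (v n)}"
  have fA: "finite ?A" using finite_divs[OF N0] by simp
  have "(\<exists>k::nat. (\<Prod>n\<in>?A. n) = k^2) \<longleftrightarrow> is_nth_power 2 (\<Prod>n\<in>?A. n)"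
    by (auto simp: is_nth_power_def)
  also have "\<dots> \<longleftrightarrow> (\<forall>p. prime p \<longrightarrow> 2 dvd multiplicity p (\<Prod>n\<in>?A. n))"
    by (rule is_nth_power_conv_multiplicity_nat) simp
  also have "\<dots> \<longleftrightarrow> (\<forall>p. prime p \<longrightarrow> even (\<Sum>n\<in>divs N. int (multiplicity p n) * v n))"
  proof -
    have eq: "2 dvd multiplicity p (\<Prod>n\<in>?A. n) \<longleftrightarrow> even (\<Sum>n\<in>divs N. int (multiplicity p n) * v n)"
      if p: "prime p" for p
    proof -
      have "multiplicity p (\<Prod>n\<in>?A. n) = (\<Sum>n\<in>?A. multiplicity p n)"
        using p fA by (intro prime_elem_multiplicity_prod_distrib) (auto simp: divs_def)
      then have "int (multiplicity p (\<Prod>n\<in>?A. n)) = (\<Sum>n\<in>?A. int (multiplicity p n))"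
        by simp
      moreover have "even (multiplicity p (\<Prod>n\<in>?A. n)) \<longleftrightarrow> even (int (multiplicity p (\<Prod>n\<in>?A. n)))"
        by simp
      ultimately have "even (multiplicity p (\<Prod>n\<in>?A. n)) \<longleftrightarrow> even (\<Sum>n\<in>?A. int (multiplicity p n))"
        by simp
      also have "\<dots> \<longleftrightarrow> even (\<Sum>n\<in>divs N. int (multiplicity p n) * v n)"
        by (rule parity_sum[OF finite_divs[OF N0], symmetric])
      finally show ?thesis .
    qed
    show ?thesis using eq by blast
  qed
  finally show ?thesis .
qed

lemma Zchar:
  assumes N0: "N > 0" and v: "v \<in> SN N"
  shows "v \<in> ZN N \<longleftrightarrow> okm 24 True (invt N v)"
proof -
  have c0: "invt N v 0 = (\<Sum>n\<in>divs N. int n * v n)" by (simp add: invt_def coef_def)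
  have c1: "invt N v 1 = (\<Sum>n\<in>divs N. int (N div n) * v n)" by (simp add: invt_def coef_def)
  have cp: "invt N v p = (\<Sum>n\<in>divs N. int (multiplicity p n) * v n)" if "prime p" for p
  proof -
    have "p \<noteq> 0" "p \<noteq> 1" using prime_gt_1_nat[OF that] by auto
    then show ?thesis by (simp add: invt_def coef_def)
  qed
  show ?thesis
    unfolding ZN_def okm_def using v square_iff[OF N0, of v] c0 c1 cp
    by (auto simp: dvd_eq_mod_eq_0)
qed

lemma powpart:
  assumes q: "prime (q::nat)" and fB: "finite B" and sub: "Bq \<subseteq> B"
    and out: "\<And>b. b \<in> B \<Longrightarrow> b \<notin> Bq \<Longrightarrow> \<not> q dvd b"
    and pw: "\<And>b. b \<in> Bq \<Longrightarrow> \<exists>k. b = q^k"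
  shows "(\<Sum>b\<in>B. c b * int (multiplicity q b)) = (\<Sum>k\<in>{k. q^k \<in> Bq}. c (q^k) * int k)"
proof -
  have "(\<Sum>b\<in>B. c b * int (multiplicity q b)) = (\<Sum>b\<in>Bq. c b * int (multiplicity q b))"
    using fB sub out by (intro sum.mono_neutral_right) (auto simp: not_dvd_imp_multiplicity_0)
  also have "Bq = (\<lambda>k. q^k) ` {k. q^k \<in> Bq}" using pw by auto
  also have "(\<Sum>b\<in>(\<lambda>k. q^k) ` {k. q^k \<in> Bq}. c b * int (multiplicity q b)) =
      (\<Sum>k\<in>{k. q^k \<in> Bq}. c (q^k) * int (multiplicity q (q^k)))"
  proof (subst sum.reindex)
    have "q > 1" using q prime_gt_1_nat by blast
    then show "inj_on (\<lambda>k. q^k) {k. q^k \<in> Bq}" by (auto simp: inj_on_def power_inject_exp)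
  qed simp
  also have "\<dots> = (\<Sum>k\<in>{k. q^k \<in> Bq}. c (q^k) * int k)"
    using q by (simp add: multiplicity_prime_power)
  finally show ?thesis .
qed

lemma prime_not_dvd_prime: "prime (p::nat) \<Longrightarrow> prime b \<Longrightarrow> p \<noteq> b \<Longrightarrow> \<not> p dvd b"
  using primes_dvd_imp_eq by blast

lemma prime_not_dvd_pow: "prime (p::nat) \<Longrightarrow> prime q \<Longrightarrow> p \<noteq> q \<Longrightarrow> \<not> p dvd q^k"
  using prime_dvd_power prime_not_dvd_prime by blast

lemma finK: assumes "prime (q::nat)" "\<And>b. b \<in> Bq \<Longrightarrow> \<exists>k. k \<le> M \<and> b = q^k"
  shows "finite {k. q^k \<in> Bq}"
proof (rule finite_subset[of _ "{..M}"])
  have "q > 1" using assms(1) prime_gt_1_nat by blast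
  show "{k. q^k \<in> Bq} \<subseteq> {..M}"
  proof
    fix x assume "x \<in> {k. q^k \<in> Bq}"
    then obtain k where "k \<le> M" "q^x = q^k" using assms(2) by blast
    then show "x \<in> {..M}" using \<open>q > 1\<close> by (simp add: power_inject_exp)
  qed
qed simp

lemma sysS_iff:
  assumes N0: "N > 0"
  shows "sysS N c \<longleftrightarrow> okm 24 True (lin N c)"
proof -
  have fB: "finite (BN N)" by (rule finite_BN[OF N0])
  have p2: "prime (2::nat)" by simp
  note p3 = prime3
  have l0: "lin N c 0 = (\<Sum>n\<in>BN N. (int n - 1) * c n)"
    by (simp add: lin_def tau0 mult.commute)
  have l1: "lin N c 1 = (\<Sum>n\<in>BN N. (int (N div n) - int N) * c n)"
    by (simp add: lin_def tau1 mult.commute)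
  have lp: "lin N c p = (\<Sum>b\<in>BN N. c b * int (multiplicity p b))" if "prime p" for p
    using that by (simp add: lin_def taup)
  define K2 where "K2 = {k. (2::nat)^k \<in> B2 N}"
  define K3 where "K3 = {k. (3::nat)^k \<in> B3 N}"
  have fK2: "finite K2" unfolding K2_def
    by (rule finK[OF p2, of _ "multiplicity 2 N"]) (use B2_pow in blast)
  have fK3: "finite K3" unfolding K3_def
    by (rule finK[OF p3, of _ "multiplicity 3 N"]) (use B3_pow in blast)
  have s2: "lin N c 2 = (\<Sum>k\<in>K2. c (2^k) * int k)"
    unfolding lp[OF p2] K2_def
  proof (rule powpart[OF p2 fB])
    show "B2 N \<subseteq> BN N" by (auto simp: BN_def)
    show "\<exists>k. b = 2^k" if "b \<in> B2 N" for b using B2_pow[OF that] by blast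
    fix b assume "b \<in> BN N" "b \<notin> B2 N"
    then consider "prime b" "b \<noteq> 2" | "b \<in> B3 N" by (auto simp: BN_def)
    then show "\<not> 2 dvd b"
    proof cases
      case 1 then show ?thesis using prime_not_dvd_prime[OF p2] by blast
    next
      case 2 then obtain k where "b = 3^k" using B3_pow by blast
      then show ?thesis using prime_not_dvd_pow[OF p2 p3] by simp
    qed
  qed
  have s3: "lin N c 3 = (\<Sum>k\<in>K3. c (3^k) * int k)"
    unfolding lp[OF p3] K3_def
  proof (rule powpart[OF p3 fB])
    show "B3 N \<subseteq> BN N" by (auto simp: BN_def)
    show "\<exists>k. b = 3^k" if "b \<in> B3 N" for b using B3_pow[OF that] by blast
    fix b assume "b \<in> BN N" "b \<notin> B3 N"
    then consider "prime b" "b \<noteq> 3" | "b \<in> B2 N" by (auto simp: BN_def)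
    then show "\<not> 3 dvd b"
    proof cases
      case 1 then show ?thesis using prime_not_dvd_prime[OF p3] by blast
    next
      case 2 then obtain k where "b = 2^k" using B2_pow by blast
      then show ?thesis using prime_not_dvd_pow[OF p3 p2] by simp
    qed
  qed
  have sp: "lin N c p = (if p dvd N then c p else 0)" if p: "prime p" "p \<noteq> 2" "p \<noteq> 3" for p
  proof -
    have "lin N c p = (\<Sum>b\<in>BN N. if b = p then c b else 0)"
      unfolding lp[OF p(1)]
    proof (rule sum.cong[OF refl])
      fix b assume b: "b \<in> BN N"
      show "c b * int (multiplicity p b) = (if b = p then c b else 0)"
      proof (cases "b = p")
        case True then show ?thesis using p by (simp add: multiplicity_self prime_gt_1_nat)
      next
        case False
        from b consider "prime b" | "b \<in> B2 N" | "b \<in> B3 N" by (auto simp: BN_def)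
        then have "\<not> p dvd b"
        proof cases
          case 1 then show ?thesis using prime_not_dvd_prime[OF p(1) _ ] False by blast
        next
          case 2 then obtain k where "b = 2^k" using B2_pow by blast
          then show ?thesis using prime_not_dvd_pow[OF p(1) p2] p by simp
        next
          case 3 then obtain k where "b = 3^k" using B3_pow by blast
          then show ?thesis using prime_not_dvd_pow[OF p(1) p3] p by simp
        qed
        then show ?thesis using False by (simp add: not_dvd_imp_multiplicity_0)
      qed
    qed
    also have "\<dots> = (if p \<in> BN N then c p else 0)" using fB by simp
    also have "p \<in> BN N \<longleftrightarrow> p dvd N" using p BN_divs[OF N0, of p] by (auto simp: BN_def divs_def)
    finally show ?thesis by simp
  qed
  have e2: "even (lin N c 2) \<longleftrightarrow> even (\<Sum>\<beta>\<in>{\<beta>::nat. 2 ^ \<beta> \<in> B2 N \<and> odd (c (2 ^ \<beta>))}. \<beta>)"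
  proof -
    have "even (lin N c 2) \<longleftrightarrow> even (\<Sum>k\<in>K2. int k * c (2^k))" unfolding s2 by (simp add: mult.commute)
    also have "\<dots> \<longleftrightarrow> even (\<Sum>k\<in>{k\<in>K2. odd (c (2^k))}. int k)" by (rule parity_sum[OF fK2])
    also have "{k\<in>K2. odd (c (2^k))} = {\<beta>::nat. 2 ^ \<beta> \<in> B2 N \<and> odd (c (2 ^ \<beta>))}" by (auto simp: K2_def)
    finally have "even (lin N c 2) \<longleftrightarrow> even (\<Sum>\<beta>\<in>{\<beta>::nat. 2 ^ \<beta> \<in> B2 N \<and> odd (c (2 ^ \<beta>))}. int \<beta>)" .
    moreover have "(\<Sum>\<beta>\<in>{\<beta>::nat. 2 ^ \<beta> \<in> B2 N \<and> odd (c (2 ^ \<beta>))}. int \<beta>) = int (\<Sum>\<beta>\<in>{\<beta>::nat. 2 ^ \<beta> \<in> B2 N \<and> odd (c (2 ^ \<beta>))}. \<beta>)"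
      by (simp add: of_nat_sum)
    ultimately show ?thesis by (simp only: even_of_nat)
  qed
  have e3: "even (lin N c 3) \<longleftrightarrow> even (\<Sum>\<beta>\<in>{\<beta>::nat. 3 ^ \<beta> \<in> B3 N \<and> odd (c (3 ^ \<beta>))}. \<beta>)"
  proof -
    have "even (lin N c 3) \<longleftrightarrow> even (\<Sum>k\<in>K3. int k * c (3^k))" unfolding s3 by (simp add: mult.commute)
    also have "\<dots> \<longleftrightarrow> even (\<Sum>k\<in>{k\<in>K3. odd (c (3^k))}. int k)" by (rule parity_sum[OF fK3])
    also have "{k\<in>K3. odd (c (3^k))} = {\<beta>::nat. 3 ^ \<beta> \<in> B3 N \<and> odd (c (3 ^ \<beta>))}" by (auto simp: K3_def)
    finally have "even (lin N c 3) \<longleftrightarrow> even (\<Sum>\<beta>\<in>{\<beta>::nat. 3 ^ \<beta> \<in> B3 N \<and> odd (c (3 ^ \<beta>))}. int \<beta>)" .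
    moreover have "(\<Sum>\<beta>\<in>{\<beta>::nat. 3 ^ \<beta> \<in> B3 N \<and> odd (c (3 ^ \<beta>))}. int \<beta>) = int (\<Sum>\<beta>\<in>{\<beta>::nat. 3 ^ \<beta> \<in> B3 N \<and> odd (c (3 ^ \<beta>))}. \<beta>)"
      by (simp add: of_nat_sum)
    ultimately show ?thesis by (simp only: even_of_nat)
  qed
  have par: "(\<forall>p. prime p \<longrightarrow> even (lin N c p)) \<longleftrightarrow>
     (\<forall>p. prime p \<and> p dvd N \<and> p \<noteq> 2 \<and> p \<noteq> 3 \<longrightarrow> even (c p)) \<and>
     even (\<Sum>\<beta>\<in>{\<beta>::nat. 2 ^ \<beta> \<in> B2 N \<and> odd (c (2 ^ \<beta>))}. \<beta>) \<and>
     even (\<Sum>\<beta>\<in>{\<beta>::nat. 3 ^ \<beta> \<in> B3 N \<and> odd (c (3 ^ \<beta>))}. \<beta>)"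
  proof
    assume a: "\<forall>p. prime p \<longrightarrow> even (lin N c p)"
    show "(\<forall>p. prime p \<and> p dvd N \<and> p \<noteq> 2 \<and> p \<noteq> 3 \<longrightarrow> even (c p)) \<and>
     even (\<Sum>\<beta>\<in>{\<beta>::nat. 2 ^ \<beta> \<in> B2 N \<and> odd (c (2 ^ \<beta>))}. \<beta>) \<and>
     even (\<Sum>\<beta>\<in>{\<beta>::nat. 3 ^ \<beta> \<in> B3 N \<and> odd (c (3 ^ \<beta>))}. \<beta>)"
    proof (intro conjI allI impI)
      fix p assume "prime p \<and> p dvd N \<and> p \<noteq> 2 \<and> p \<noteq> 3"
      then show "even (c p)" using a sp[of p] by auto
    next
      show "even (\<Sum>\<beta>\<in>{\<beta>::nat. 2 ^ \<beta> \<in> B2 N \<and> odd (c (2 ^ \<beta>))}. \<beta>)" using a p2 e2 by blast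
    next
      show "even (\<Sum>\<beta>\<in>{\<beta>::nat. 3 ^ \<beta> \<in> B3 N \<and> odd (c (3 ^ \<beta>))}. \<beta>)" using a p3 e3 by blast
    qed
  next
    assume a: "(\<forall>p. prime p \<and> p dvd N \<and> p \<noteq> 2 \<and> p \<noteq> 3 \<longrightarrow> even (c p)) \<and>
     even (\<Sum>\<beta>\<in>{\<beta>::nat. 2 ^ \<beta> \<in> B2 N \<and> odd (c (2 ^ \<beta>))}. \<beta>) \<and>
     even (\<Sum>\<beta>\<in>{\<beta>::nat. 3 ^ \<beta> \<in> B3 N \<and> odd (c (3 ^ \<beta>))}. \<beta>)"
    show "\<forall>p. prime p \<longrightarrow> even (lin N c p)"
    proof (intro allI impI)
      fix p :: nat assume p: "prime p"
      show "even (lin N c p)"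
      proof (cases "p = 2")
        case True then show ?thesis using a e2 by simp
      next
        case F2: False
        show ?thesis
        proof (cases "p = 3")
          case True then show ?thesis using a e3 by simp
        next
          case False then show ?thesis using a sp[OF p F2 False] p F2 by auto
        qed
      qed
    qed
  qed
  show ?thesis
    unfolding sysS_def okm_def par[symmetric] l0 by (simp add: dvd_eq_mod_eq_0 l1[unfolded One_nat_def])
qed

definition linP :: "nat \<Rightarrow> nat list \<Rightarrow> (nat \<Rightarrow> int) \<Rightarrow> nat \<Rightarrow> int" where
  "linP N bs d i = (\<Sum>j<length bs. d j * tau N (bs!j) i)"

lemma sum_evec: "finite D \<Longrightarrow> (\<Sum>n\<in>D. f n * evec b n) = (if b \<in> D then f b else 0)"
  by (simp add: evec_def if_distrib[of "\<lambda>x. f _ * x"] sum.delta' cong: if_cong)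

lemma sum_evec': "finite D \<Longrightarrow> (\<Sum>n\<in>D. evec b n) = (if b \<in> D then 1 else 0)"
  using sum_evec[of D "\<lambda>_. 1" b] by simp

lemma repvec_S:
  assumes N0: "N > 0" and sub: "set bs \<subseteq> divs N"
  shows "repvec bs d \<in> SN N"
proof -
  have bj: "bs ! j \<in> divs N" if "j < length bs" for j using sub that by auto
  have out: "repvec bs d n = 0" if "n \<notin> divs N" for n
  proof -
    have "evec (bs!j) n = 0" if "j < length bs" for j using bj[OF that] \<open>n \<notin> divs N\<close> by (auto simp: evec_def)
    moreover have "evec 1 n = 0" using one_divs[of N] that by (auto simp: evec_def)
    ultimately show ?thesis by (simp add: repvec_def)
  qed
  have "(\<Sum>n\<in>divs N. repvec bs d n) =
      (\<Sum>j<length bs. d j * (\<Sum>n\<in>divs N. evec (bs!j) n)) - (\<Sum>j<length bs. d j) * (\<Sum>n\<in>divs N. evec 1 n)"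
    unfolding repvec_def by (simp add: sum_subtractf sum.swap[of _ "divs N"] sum_distrib_left sum_distrib_right)
  also have "\<dots> = 0" using finite_divs[OF N0] bj one_divs[of N] by (simp add: sum_evec')
  finally show ?thesis using out by (simp add: SN_def)
qed

lemma inv_repvec:
  assumes N0: "N > 0" and sub: "set bs \<subseteq> divs N"
  shows "invt N (repvec bs d) i = linP N bs d i"
proof -
  have bj: "bs ! j \<in> divs N" if "j < length bs" for j using sub that by auto
  have "invt N (repvec bs d) i =
      (\<Sum>j<length bs. d j * (\<Sum>n\<in>divs N. coef N i n * evec (bs!j) n)) - (\<Sum>j<length bs. d j) * (\<Sum>n\<in>divs N. coef N i n * evec 1 n)"
    unfolding repvec_def invt_def
    by (simp add: right_diff_distrib sum_subtractf sum.swap[of _ "divs N"] sum_distrib_left sum_distrib_right algebra_simps)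
  also have "\<dots> = (\<Sum>j<length bs. d j * coef N i (bs!j)) - (\<Sum>j<length bs. d j) * coef N i 1"
    using finite_divs[OF N0] bj one_divs[of N] by (simp add: sum_evec)
  also have "\<dots> = linP N bs d i"
    by (simp add: linP_def tau_def right_diff_distrib sum_subtractf sum_distrib_right)
  finally show ?thesis .
qed

lemma lin_linP:
  assumes "distinct bs" "set bs = BN N"
  shows "lin N c i = linP N bs (\<lambda>j. c (bs!j)) i"
  unfolding lin_def linP_def
  by (rule sum.reindex_bij_betw[symmetric, of "(!) bs", OF bij_betw_nth[OF assms(1) refl assms(2)[symmetric]]])

lemma linP_cong: "(\<And>j. j < length bs \<Longrightarrow> d j = e j) \<Longrightarrow> linP N bs d i = linP N bs e i"
  unfolding linP_def by (rule sum.cong) auto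

lemma linP_diff: "linP N bs (\<lambda>j. d j - e j) i = linP N bs d i - linP N bs e i"
  unfolding linP_def by (simp add: left_diff_distrib sum_subtractf)

lemma linP_add_scale: "linP N bs (\<lambda>j. d j + k * e j) i = linP N bs d i + k * linP N bs e i"
  unfolding linP_def by (simp add: distrib_right sum.distrib sum_distrib_left mult.assoc)

definition cv :: "nat list \<Rightarrow> (nat \<Rightarrow> int) \<Rightarrow> nat \<Rightarrow> int" where
  "cv bs d = (\<lambda>b. d (inv_into {..<length bs} ((!) bs) b))"

lemma cv_nth: "distinct bs \<Longrightarrow> j < length bs \<Longrightarrow> cv bs d (bs!j) = d j"
  unfolding cv_def by (subst inv_into_f_f) (auto intro: inj_on_nth)

lemma sysS_Lat:
  assumes N0: "N > 0" and "distinct bs" "set bs = BN N"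
  shows "sysS N c \<longleftrightarrow> okm 24 True (linP N bs (\<lambda>j. c (bs!j)))"
  unfolding sysS_iff[OF N0] using lin_linP[OF assms(2,3)] by presburger

lemma Delta_props:
  assumes N0: "N > 0" and dist: "distinct bs" and sb: "set bs = BN N" and j: "j < length bs"
  shows "1 \<le> Delta N bs j \<and> Delta N bs j \<le> 24 \<and>
     (\<exists>c. sysS N c \<and> (\<forall>i<j. c (bs!i) = 0) \<and> c (bs!j) = Delta N bs j) \<and>
     (\<forall>m. 1 \<le> m \<longrightarrow> m < Delta N bs j \<longrightarrow> \<not> (\<exists>c. sysS N c \<and> (\<forall>i<j. c (bs!i) = 0) \<and> c (bs!j) = m))"
proof -
  define P where "P m \<longleftrightarrow> 1 \<le> m \<and> m \<le> 24 \<and> (\<exists>c. sysS N c \<and> (\<forall>i<j. c (bs!i) = 0) \<and> c (bs!j) = m)" for m :: int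
  have D: "Delta N bs j = (LEAST m. P m)" unfolding Delta_def P_def by simp
  have bB: "bs ! j \<in> BN N" using j sb nth_mem by blast
  have P24: "P (int 24)"
  proof -
    define c where "c = (\<lambda>b. if b = bs!j then (24::int) else 0)"
    have "lin N c i = 24 * tau N (bs!j) i" for i
    proof -
      have "lin N c i = (\<Sum>b\<in>BN N. if b = bs!j then 24 * tau N b i else 0)"
        unfolding lin_def c_def by (rule sum.cong) auto
      also have "\<dots> = 24 * tau N (bs!j) i" using bB finite_BN[OF N0] by simp
      finally show ?thesis .
    qed
    then have "okm 24 True (lin N c)" by (simp add: okm_def)
    then have "sysS N c" using sysS_iff[OF N0] by simp
    moreover have "\<forall>i<j. c (bs!i) = 0" using dist j by (auto simp: c_def nth_eq_iff_index_eq)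
    moreover have "c (bs!j) = 24" by (simp add: c_def)
    ultimately show ?thesis unfolding P_def by auto
  qed
  define k where "k = (LEAST k::nat. P (int k))"
  have Pk: "P (int k)" unfolding k_def by (rule LeastI[of _ 24]) (use P24 in simp)
  have kmin: "int k \<le> m" if "P m" for m
  proof -
    have "m \<ge> 1" using that by (simp add: P_def)
    then have "m = int (nat m)" by simp
    then have "P (int (nat m))" using that by simp
    then have "k \<le> nat m" unfolding k_def by (rule Least_le)
    then show ?thesis using \<open>m \<ge> 1\<close> by simp
  qed
  have "(LEAST m. P m) = int k" by (rule Least_equality) (use Pk kmin in auto)
  then have Dk: "Delta N bs j = int k" using D by simp
  show ?thesis
  proof (intro conjI allI impI)
    show "1 \<le> Delta N bs j" "Delta N bs j \<le> 24" using Pk Dk by (auto simp: P_def)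
    show "\<exists>c. sysS N c \<and> (\<forall>i<j. c (bs!i) = 0) \<and> c (bs!j) = Delta N bs j" using Pk Dk by (auto simp: P_def)
    fix m assume m: "1 \<le> m" "m < Delta N bs j"
    show "\<not> (\<exists>c. sysS N c \<and> (\<forall>i<j. c (bs!i) = 0) \<and> c (bs!j) = m)"
    proof
      assume "\<exists>c. sysS N c \<and> (\<forall>i<j. c (bs!i) = 0) \<and> c (bs!j) = m"
      moreover have "m \<le> 24" using m Pk Dk by (auto simp: P_def)
      ultimately have "P m" using m by (auto simp: P_def)
      then have "int k \<le> m" by (rule kmin)
      then show False using m Dk by simp
    qed
  qed
qed

lemma reduce:
  assumes N0: "N > 0" and dist: "distinct bs" and sb: "set bs = BN N"
  shows "k \<le> length bs \<Longrightarrow> \<exists>d. okm 24 True (linP N bs (\<lambda>j. d0 j - d j)) \<and> (\<forall>j<k. 0 \<le> d j \<and> d j < Delta N bs j)"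
proof (induction k)
  case 0
  show ?case by (intro exI[of _ d0]) (simp add: linP_def okm_def)
next
  case (Suc k)
  then obtain d where d: "okm 24 True (linP N bs (\<lambda>j. d0 j - d j))" "\<forall>j<k. 0 \<le> d j \<and> d j < Delta N bs j"
    by auto
  have k: "k < length bs" using Suc.prems by simp
  note DP = Delta_props[OF N0 dist sb k]
  obtain c where c: "sysS N c" "\<forall>i<k. c (bs!i) = 0" "c (bs!k) = Delta N bs k" using DP by blast
  define w where "w = (\<lambda>j. c (bs!j))"
  have Lw: "okm 24 True (linP N bs w)" using c(1) sysS_Lat[OF N0 dist sb] w_def by simp
  define q where "q = d k div Delta N bs k"
  define d' where "d' = (\<lambda>j. d j - q * w j)"
  have "okm 24 True (\<lambda>i. linP N bs (\<lambda>j. d0 j - d j) i + q * linP N bs w i)"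
    by (intro okm_add okm_scale d(1) Lw)
  moreover have "linP N bs (\<lambda>j. d0 j - d' j) = (\<lambda>i. linP N bs (\<lambda>j. d0 j - d j) i + q * linP N bs w i)"
  proof (rule ext)
    fix i
    have "linP N bs (\<lambda>j. d0 j - d' j) i = linP N bs (\<lambda>j. (d0 j - d j) + q * w j) i"
      unfolding d'_def by (simp add: algebra_simps)
    then show "linP N bs (\<lambda>j. d0 j - d' j) i = linP N bs (\<lambda>j. d0 j - d j) i + q * linP N bs w i"
      by (simp add: linP_add_scale)
  qed
  ultimately have L: "okm 24 True (linP N bs (\<lambda>j. d0 j - d' j))" by simp
  have pos: "Delta N bs k > 0" using DP by simp
  have "\<forall>j<Suc k. 0 \<le> d' j \<and> d' j < Delta N bs j"
  proof (intro allI impI)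
    fix j assume "j < Suc k"
    then consider "j < k" | "j = k" by linarith
    then show "0 \<le> d' j \<and> d' j < Delta N bs j"
    proof cases
      case 1 then show ?thesis using d(2) c(2) by (simp add: d'_def w_def)
    next
      case 2
      have "d' k = d k mod Delta N bs k"
        unfolding d'_def w_def q_def c(3) using div_mult_mod_eq[of "d k" "Delta N bs k"] by linarith
      then show ?thesis using 2 pos by simp
    qed
  qed
  then show ?case using L by blast
qed

lemma unique_box:
  assumes N0: "N > 0" and dist: "distinct bs" and sb: "set bs = BN N"
    and b1: "\<forall>j<length bs. 0 \<le> d1 j \<and> d1 j < Delta N bs j"
    and b2: "\<forall>j<length bs. 0 \<le> d2 j \<and> d2 j < Delta N bs j"
    and L: "okm 24 True (linP N bs (\<lambda>j. d1 j - d2 j))"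
  shows "\<forall>j<length bs. d1 j = d2 j"
proof (rule ccontr)
  assume "\<not> (\<forall>j<length bs. d1 j = d2 j)"
  then have ex: "\<exists>j. j < length bs \<and> d1 j \<noteq> d2 j" by blast
  define j0 where "j0 = (LEAST j. j < length bs \<and> d1 j \<noteq> d2 j)"
  have j0: "j0 < length bs" "d1 j0 \<noteq> d2 j0" using LeastI_ex[OF ex] unfolding j0_def by auto
  have before: "d1 i = d2 i" if "i < j0" for i
    using not_less_Least[of i "\<lambda>j. j < length bs \<and> d1 j \<noteq> d2 j"] that j0(1) unfolding j0_def by auto
  define e where "e = (if d1 j0 > d2 j0 then (\<lambda>j. d1 j - d2 j) else (\<lambda>j. d2 j - d1 j))"
  have Le: "okm 24 True (linP N bs e)"
  proof (cases "d1 j0 > d2 j0")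
    case True then show ?thesis using L by (simp add: e_def)
  next
    case False
    have "okm 24 True (\<lambda>i. (-1) * linP N bs (\<lambda>j. d1 j - d2 j) i)" by (rule okm_scale[OF L])
    moreover have "(-1) * linP N bs (\<lambda>j. d1 j - d2 j) i = linP N bs (\<lambda>j. d2 j - d1 j) i" for i
      by (simp add: linP_diff)
    ultimately show ?thesis using False by (simp add: e_def)
  qed
  have ej0: "1 \<le> e j0" "e j0 < Delta N bs j0" using j0 b1[rule_format, OF j0(1)] b2[rule_format, OF j0(1)] by (auto simp: e_def)
  have ebefore: "e i = 0" if "i < j0" for i using before[OF that] by (simp add: e_def)
  define c where "c = cv bs e"
  have cn: "c (bs!j) = e j" if "j < length bs" for j using cv_nth[OF dist that] by (simp add: c_def)
  have "linP N bs (\<lambda>j. c (bs!j)) = linP N bs e"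
    by (rule ext, rule linP_cong) (simp add: cn)
  then have "sysS N c" using Le sysS_Lat[OF N0 dist sb] by simp
  moreover have "\<forall>i<j0. c (bs!i) = 0" using cn ebefore j0(1) by simp
  moreover have "c (bs!j0) = e j0" using cn j0(1) by simp
  ultimately show False using Delta_props[OF N0 dist sb j0(1)] ej0 by blast
qed

theorem theorem6p8:
  fixes N :: nat and bs :: "nat list"
  assumes "N \<ge> 2" and "distinct bs" and "set bs = BN N"
  shows "Reps N bs \<subseteq> SN N \<and>
         (\<forall>s\<in>SN N. \<exists>!r\<in>Reps N bs. (\<lambda>n. s n - r n) \<in> ZN N)"
proof -
  have N0: "N > 0" using assms(1) by simp
  note dist = assms(2) and sb = assms(3)
  have sub: "set bs \<subseteq> divs N" using sb BN_divs[OF N0] by blast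
  have SN_diff: "(\<lambda>n. v n - w n) \<in> SN N" if "v \<in> SN N" "w \<in> SN N" for v w
    using that by (simp add: SN_def sum_subtractf)
  have part1: "Reps N bs \<subseteq> SN N"
    unfolding Reps_def using repvec_S[OF N0 sub] by blast
  have part2: "\<exists>!r\<in>Reps N bs. (\<lambda>n. s n - r n) \<in> ZN N" if s: "s \<in> SN N" for s
  proof -
    obtain c where c: "okm 24 True (\<lambda>i. invt N s i - lin N c i)"
      using inH_inv[OF N0 s] by (auto simp: inH_def)
    define d0 where "d0 = (\<lambda>j. c (bs!j))"
    obtain d where d: "okm 24 True (linP N bs (\<lambda>j. d0 j - d j))"
      and db: "\<forall>j<length bs. 0 \<le> d j \<and> d j < Delta N bs j"
      using reduce[OF N0 dist sb, of "length bs" d0] by auto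
    define r where "r = repvec bs d"
    have rR: "r \<in> Reps N bs" unfolding Reps_def r_def using db by blast
    have rS: "r \<in> SN N" using part1 rR by blast
    have "okm 24 True (\<lambda>i. (invt N s i - lin N c i) + linP N bs (\<lambda>j. d0 j - d j) i)"
      by (intro okm_add c d)
    moreover have e: "invt N (\<lambda>n. s n - r n) i = (invt N s i - lin N c i) + linP N bs (\<lambda>j. d0 j - d j) i" for i
      unfolding inv_diff r_def inv_repvec[OF N0 sub] linP_diff lin_linP[OF dist sb] d0_def by simp
    moreover have "invt N (\<lambda>n. s n - r n) = (\<lambda>i. (invt N s i - lin N c i) + linP N bs (\<lambda>j. d0 j - d j) i)"
      by (intro ext) (rule e)
    ultimately have "okm 24 True (invt N (\<lambda>n. s n - r n))" by simp
    then have rZ: "(\<lambda>n. s n - r n) \<in> ZN N" using Zchar[OF N0 SN_diff[OF s rS]] by simp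
    have uniq: "r1 = r2" if r1: "r1 \<in> Reps N bs" "(\<lambda>n. s n - r1 n) \<in> ZN N"
      and r2: "r2 \<in> Reps N bs" "(\<lambda>n. s n - r2 n) \<in> ZN N" for r1 r2
    proof -
      obtain d1 where d1: "r1 = repvec bs d1" "\<forall>j<length bs. 0 \<le> d1 j \<and> d1 j < Delta N bs j"
        using r1(1) unfolding Reps_def by blast
      obtain d2 where d2: "r2 = repvec bs d2" "\<forall>j<length bs. 0 \<le> d2 j \<and> d2 j < Delta N bs j"
        using r2(1) unfolding Reps_def by blast
      have S1: "r1 \<in> SN N" "r2 \<in> SN N" using r1(1) r2(1) part1 by auto
      have o1: "okm 24 True (invt N (\<lambda>n. s n - r1 n))"
        using Zchar[OF N0 SN_diff[OF s S1(1)]] r1(2) by simp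
      have o2: "okm 24 True (invt N (\<lambda>n. s n - r2 n))"
        using Zchar[OF N0 SN_diff[OF s S1(2)]] r2(2) by simp
      have "okm 24 True (\<lambda>i. invt N (\<lambda>n. s n - r2 n) i - invt N (\<lambda>n. s n - r1 n) i)"
        by (rule okm_diff[OF o2 o1])
      moreover have e: "invt N (\<lambda>n. s n - r2 n) i - invt N (\<lambda>n. s n - r1 n) i = linP N bs (\<lambda>j. d1 j - d2 j) i" for i
        unfolding inv_diff d1(1) d2(1) inv_repvec[OF N0 sub] linP_diff by simp
      moreover have "(\<lambda>i. invt N (\<lambda>n. s n - r2 n) i - invt N (\<lambda>n. s n - r1 n) i) = linP N bs (\<lambda>j. d1 j - d2 j)"
        by (intro ext) (rule e)
      ultimately have "okm 24 True (linP N bs (\<lambda>j. d1 j - d2 j))" by simp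
      then have eq: "\<forall>j<length bs. d1 j = d2 j" by (rule unique_box[OF N0 dist sb d1(2) d2(2)])
      have s1: "(\<Sum>j<length bs. d1 j * evec (bs ! j) n) = (\<Sum>j<length bs. d2 j * evec (bs ! j) n)" for n
        by (rule sum.cong) (use eq in auto)
      have s2: "(\<Sum>j<length bs. d1 j) = (\<Sum>j<length bs. d2 j)"
        by (rule sum.cong) (use eq in auto)
      show ?thesis unfolding d1(1) d2(1) repvec_def s1 s2 ..
    qed
    show ?thesis using rR rZ uniq by blast
  qed
  show ?thesis using part1 part2 by blast
qed

end
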